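(* For all integers $0\le t\le n$, there exists a monotone, acyclic $2$-CNF formula $F$ on $n$ variables that is $t$-admissible and satisfies $|\mathrm{sat}_t(F)|=S(n,t,2)$. In particular $S^+(n,t,2)=S(n,t,2)$.
   Context: A $2$-CNF formula over $x_1,\dots,x_n$ is a conjunction of clauses each containing at most two literals; it is monotone if no literal is negated. The implication graph $G(F)$ is the directed graph on the $2n$ literals which, for each clause $X\lor Y$, contains edges $\neg X\to Y$ and $\neg Y\to X$; $F$ is acyclic if $G(F)$ has no directed cycle. $\mathrm{sat}_t(F)$ is the set of satisfying assignments of Hamming weight exactly $t$; $F$ is $t$-admissible if it has no satisfying assignment of Hamming weight less than $t$. $S(n,t,k)$ (resp. $S^+(n,t,k)$) is the maximum of $|\mathrm{sat}_t(F)|$ over $t$-admissible $k$-CNF (resp. monotone $k$-CNF) formulas $F$ on $n$ variables. *)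

theory Defs
  imports Main
begin

text \<open>Variables x_1..x_n are represented by the indices 0..<n.\<close>

datatype lit = Pos nat | Neg nat

fun var :: "lit \<Rightarrow> nat" where
  "var (Pos i) = i" | "var (Neg i) = i"

fun neg :: "lit \<Rightarrow> lit" where
  "neg (Pos i) = Neg i" | "neg (Neg i) = Pos i"

text \<open>A clause is a set of literals (a disjunction); a CNF formula is a set of clauses
  (a conjunction). An assignment is the set of variables set to true; its Hamming
  weight is its cardinality.\<close>

type_synonym clause = "lit set"
type_synonym cnf = "clause set"

fun lit_true :: "nat set \<Rightarrow> lit \<Rightarrow> bool" where
  "lit_true A (Pos i) = (i \<in> A)" | "lit_true A (Neg i) = (i \<notin> A)"

definition satisfies :: "nat set \<Rightarrow> cnf \<Rightarrow> bool" where
  "satisfies A F \<longleftrightarrow> (\<forall>C\<in>F. \<exists>l\<in>C. lit_true A l)"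

definition is_kcnf :: "nat \<Rightarrow> nat \<Rightarrow> cnf \<Rightarrow> bool" where
  "is_kcnf n k F \<longleftrightarrow> (\<forall>C\<in>F. card C \<le> k \<and> (\<forall>l\<in>C. var l < n))"

definition monotone_cnf :: "cnf \<Rightarrow> bool" where
  "monotone_cnf F \<longleftrightarrow> (\<forall>C\<in>F. \<forall>l\<in>C. \<exists>i. l = Pos i)"

text \<open>Implication graph: for a clause X \<or> Y, edges \<not>X \<rightarrow> Y and \<not>Y \<rightarrow> X
  (a one-literal clause X is read as X \<or> X).\<close>
definition impl_graph :: "cnf \<Rightarrow> (lit \<times> lit) set" where
  "impl_graph F = {(neg X, Y) | X Y. \<exists>C\<in>F. X \<in> C \<and> Y \<in> C \<and> (C = {X, Y})}"

definition acyclic_cnf :: "cnf \<Rightarrow> bool" where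
  "acyclic_cnf F \<longleftrightarrow> acyclic (impl_graph F)"

definition sat_t :: "nat \<Rightarrow> nat \<Rightarrow> cnf \<Rightarrow> nat set set" where
  "sat_t n t F = {A. A \<subseteq> {0..<n} \<and> card A = t \<and> satisfies A F}"

definition admissible :: "nat \<Rightarrow> nat \<Rightarrow> cnf \<Rightarrow> bool" where
  "admissible n t F \<longleftrightarrow> (\<forall>A. A \<subseteq> {0..<n} \<and> card A < t \<longrightarrow> \<not> satisfies A F)"

definition S :: "nat \<Rightarrow> nat \<Rightarrow> nat \<Rightarrow> nat" where
  "S n t k = Max {card (sat_t n t F) | F. is_kcnf n k F \<and> admissible n t F}"

definition S_plus :: "nat \<Rightarrow> nat \<Rightarrow> nat \<Rightarrow> nat" where
  "S_plus n t k = Max {card (sat_t n t F) | F. is_kcnf n k F \<and> monotone_cnf F \<and> admissible n t F}"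

end

theory Submission
  imports Defs
begin

definition maj :: "nat set \<Rightarrow> nat set \<Rightarrow> nat set \<Rightarrow> nat set" where
  "maj A B C = (A \<inter> B) \<union> (B \<inter> C) \<union> (A \<inter> C)"

lemma lit_maj1: "lit_true A l \<Longrightarrow> lit_true B l \<Longrightarrow> lit_true (maj A B C) l"
  by (cases l) (auto simp: maj_def)
lemma lit_maj2: "lit_true B l \<Longrightarrow> lit_true C l \<Longrightarrow> lit_true (maj A B C) l"
  by (cases l) (auto simp: maj_def)
lemma lit_maj3: "lit_true A l \<Longrightarrow> lit_true C l \<Longrightarrow> lit_true (maj A B C) l"
  by (cases l) (auto simp: maj_def)

lemma maj_sat:
  assumes cl: "\<forall>K\<in>F. finite K \<and> card K \<le> 2"
    and sA: "satisfies A F" and sB: "satisfies B F" and sC: "satisfies C F"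
  shows "satisfies (maj A B C) F"
  unfolding satisfies_def
proof
  fix K assume K: "K \<in> F"
  obtain la where la: "la \<in> K" "lit_true A la" using sA K unfolding satisfies_def by blast
  obtain lb where lb: "lb \<in> K" "lit_true B lb" using sB K unfolding satisfies_def by blast
  obtain lc where lc: "lc \<in> K" "lit_true C lc" using sC K unfolding satisfies_def by blast
  show "\<exists>l\<in>K. lit_true (maj A B C) l"
  proof (cases "la = lb \<or> lb = lc \<or> la = lc")
    case True
    then show ?thesis using la lb lc lit_maj1 lit_maj2 lit_maj3 by metis
  next
    case False
    have "card {la, lb, lc} \<le> card K"
      using la lb lc K cl by (intro card_mono) auto
    moreover have "card {la, lb, lc} = 3" using False by auto
    ultimately show ?thesis using K cl by auto
  qed
qed

lemma helly:
  assumes cl: "\<forall>K\<in>F. finite K \<and> card K \<le> 2"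
  shows "finite W \<Longrightarrow> W \<noteq> {} \<Longrightarrow>
     (\<forall>x\<in>W. \<forall>y\<in>W. \<exists>A. A \<subseteq> {0..<n} \<and> satisfies A F \<and> x \<notin> A \<and> y \<notin> A) \<Longrightarrow>
     \<exists>A. A \<subseteq> {0..<n} \<and> satisfies A F \<and> A \<inter> W = {}"
proof (induction "card W" arbitrary: W rule: less_induct)
  case less
  show ?case
  proof (cases "card W \<le> 2")
    case True
    obtain x where x: "x \<in> W" using less.prems by auto
    have "\<exists>y\<in>W. W \<subseteq> {x, y}"
    proof (cases "W - {x} = {}")
      case True then show ?thesis using x by auto
    next
      case False
      then obtain y where y: "y \<in> W" "y \<noteq> x" by auto
      have "card (W - {x, y}) = card W - card {x, y}"
        using x y less.prems by (intro card_Diff_subset) auto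
      also have "\<dots> = 0" using True y by auto
      finally have "W - {x, y} = {}" using less.prems by auto
      then show ?thesis using y by auto
    qed
    then obtain y where y: "y \<in> W" "W \<subseteq> {x, y}" by blast
    obtain A where "A \<subseteq> {0..<n}" "satisfies A F" "x \<notin> A" "y \<notin> A"
      using less.prems(3) x y by blast
    then show ?thesis using y by blast
  next
    case False
    obtain a where a: "a \<in> W" using less.prems by auto
    have "card (W - {a}) = card W - 1" using a less.prems by simp
    then have "W - {a} \<noteq> {}" using False by (intro notI) simp
    then obtain b where b: "b \<in> W" "b \<noteq> a" by blast
    have "card (W - {a, b}) = card W - card {a, b}"
      using a b less.prems by (intro card_Diff_subset) auto
    then have "card (W - {a, b}) > 0" using False b by auto
    then have "W - {a, b} \<noteq> {}" by (intro notI) simp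
    then obtain c where c: "c \<in> W" "c \<noteq> a" "c \<noteq> b" by blast
    have IH: "\<exists>A. A \<subseteq> {0..<n} \<and> satisfies A F \<and> A \<inter> (W - {z}) = {}"
      if "z \<in> W" "w \<in> W" "w \<noteq> z" for z w
    proof (rule less.hyps)
      show "card (W - {z}) < card W" using that less.prems by (metis card_Diff1_less)
      show "finite (W - {z})" using less.prems by auto
      show "W - {z} \<noteq> {}" using that by auto
      show "\<forall>x\<in>W - {z}. \<forall>y\<in>W - {z}. \<exists>A. A \<subseteq> {0..<n} \<and> satisfies A F \<and> x \<notin> A \<and> y \<notin> A"
        using less.prems(3) by auto
    qed
    obtain Aa where Aa: "Aa \<subseteq> {0..<n}" "satisfies Aa F" "Aa \<inter> (W - {a}) = {}"
      using IH[OF a b(1)] b by blast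
    obtain Ab where Ab: "Ab \<subseteq> {0..<n}" "satisfies Ab F" "Ab \<inter> (W - {b}) = {}"
      using IH[OF b(1) a] b by blast
    obtain Ac where Ac: "Ac \<subseteq> {0..<n}" "satisfies Ac F" "Ac \<inter> (W - {c}) = {}"
      using IH[OF c(1) a] c by blast
    have "maj Aa Ab Ac \<subseteq> {0..<n}" using Aa Ab Ac unfolding maj_def by auto
    moreover have "satisfies (maj Aa Ab Ac) F" using maj_sat[OF cl Aa(2) Ab(2) Ac(2)] .
    moreover have "maj Aa Ab Ac \<inter> W = {}"
      using Aa(3) Ab(3) Ac(3) b c unfolding maj_def by blast
    ultimately show ?thesis by blast
  qed
qed

lemma kcnf_sub:
  assumes "is_kcnf n k F"
  shows "F \<subseteq> Pow (Pos ` {..<n} \<union> Neg ` {..<n})"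
proof
  fix K assume "K \<in> F"
  then have "\<forall>l\<in>K. var l < n" using assms unfolding is_kcnf_def by auto
  have "K \<subseteq> Pos ` {..<n} \<union> Neg ` {..<n}"
  proof
    fix l assume "l \<in> K"
    then have "var l < n" using \<open>\<forall>l\<in>K. var l < n\<close> by auto
    then show "l \<in> Pos ` {..<n} \<union> Neg ` {..<n}" by (cases l) auto
  qed
  then show "K \<in> Pow (Pos ` {..<n} \<union> Neg ` {..<n})" by auto
qed

lemma key:
  assumes kc: "is_kcnf n 2 F" and ad: "admissible n t F" and tn: "t \<le> n"
  shows "\<exists>F'. is_kcnf n 2 F' \<and> monotone_cnf F' \<and> admissible n t F'
     \<and> card (sat_t n t F) \<le> card (sat_t n t F')"
proof -
  define P where "P = Pos ` {..<n}"
  define F' where "F' = {C. C \<subseteq> P \<and> card C \<le> 2 \<and> (\<forall>A\<in>sat_t n t F. \<exists>l\<in>C. lit_true A l)}"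
  have k': "is_kcnf n 2 F'" unfolding is_kcnf_def F'_def P_def by auto
  have m': "monotone_cnf F'" unfolding monotone_cnf_def F'_def P_def by auto
  have sub: "sat_t n t F \<subseteq> sat_t n t F'"
  proof
    fix A assume A: "A \<in> sat_t n t F"
    then have "satisfies A F'" unfolding satisfies_def F'_def by auto
    then show "A \<in> sat_t n t F'" using A unfolding sat_t_def by auto
  qed
  have fin: "finite (sat_t n t F')"
    by (rule finite_subset[of _ "Pow {0..<n}"]) (auto simp: sat_t_def)
  have cl: "\<forall>K\<in>F. finite K \<and> card K \<le> 2"
  proof
    fix K assume K: "K \<in> F"
    have "K \<subseteq> Pos ` {..<n} \<union> Neg ` {..<n}" using kcnf_sub[OF kc] K by auto
    then have "finite K" by (rule finite_subset) auto
    then show "finite K \<and> card K \<le> 2" using kc K unfolding is_kcnf_def by auto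
  qed
  have adm': "admissible n t F'"
    unfolding admissible_def
  proof (intro allI impI notI)
    fix B assume B: "B \<subseteq> {0..<n} \<and> card B < t" and sB: "satisfies B F'"
    define U where "U = {0..<n} - B"
    have fU: "finite U" unfolding U_def by auto
    have "U \<noteq> {}"
    proof
      assume "U = {}"
      then have "{0..<n} \<subseteq> B" unfolding U_def by auto
      then have "n \<le> card B" using B by (metis card_atLeastLessThan card_mono finite_atLeastLessThan
          finite_subset diff_zero)
      then show False using B tn by auto
    qed
    have pair: "\<forall>x\<in>U. \<forall>y\<in>U. \<exists>A. A \<subseteq> {0..<n} \<and> satisfies A F \<and> x \<notin> A \<and> y \<notin> A"
    proof (intro ballI)
      fix x y assume x: "x \<in> U" and y: "y \<in> U"
      show "\<exists>A. A \<subseteq> {0..<n} \<and> satisfies A F \<and> x \<notin> A \<and> y \<notin> A"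
      proof (rule ccontr)
        assume neg: "\<not> ?thesis"
        have "{Pos x, Pos y} \<in> F'"
          unfolding F'_def P_def
        proof (intro CollectI conjI ballI)
          show "{Pos x, Pos y} \<subseteq> Pos ` {..<n}" using x y unfolding U_def by auto
          show "card {Pos x, Pos y} \<le> 2" by (simp add: card_insert_if)
          fix A assume "A \<in> sat_t n t F"
          then have "A \<subseteq> {0..<n}" "satisfies A F" unfolding sat_t_def by auto
          then have "x \<in> A \<or> y \<in> A" using neg by blast
          then show "\<exists>l\<in>{Pos x, Pos y}. lit_true A l" by auto
        qed
        then have "x \<in> B \<or> y \<in> B" using sB unfolding satisfies_def by fastforce
        then show False using x y unfolding U_def by auto
      qed
    qed
    obtain A where A: "A \<subseteq> {0..<n}" "satisfies A F" "A \<inter> U = {}"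
      using helly[OF cl fU \<open>U \<noteq> {}\<close> pair] by blast
    have "A \<subseteq> B" using A unfolding U_def by auto
    then have "card A \<le> card B" using B by (meson card_mono finite_atLeastLessThan finite_subset)
    then have "card A < t" using B by auto
    then show False using ad A unfolding admissible_def by auto
  qed
  show ?thesis using k' m' adm' card_mono[OF fin sub] by blast
qed

lemma mono_acyclic:
  assumes "monotone_cnf F"
  shows "acyclic_cnf F"
proof -
  let ?r = "impl_graph F"
  have edge: "\<exists>i j. a = Neg i \<and> b = Pos j" if "(a, b) \<in> ?r" for a b
  proof -
    from that obtain X Y C where h: "a = neg X" "b = Y" "C \<in> F" "X \<in> C" "Y \<in> C"
      unfolding impl_graph_def by blast
    obtain i where "X = Pos i" using assms h(3,4) unfolding monotone_cnf_def by blast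
    moreover obtain j where "Y = Pos j" using assms h(3,5) unfolding monotone_cnf_def by blast
    ultimately show ?thesis using h by auto
  qed
  have tr: "(a, b) \<in> ?r" if "(a, b) \<in> ?r\<^sup>+" for a b
    using that
  proof (induction rule: trancl_induct)
    case (base y) then show ?case .
  next
    case (step y z)
    then show ?case using edge[OF step.hyps(2)] edge[OF step.IH] by auto
  qed
  show ?thesis unfolding acyclic_cnf_def acyclic_def
  proof (intro allI notI)
    fix x assume "(x, x) \<in> ?r\<^sup>+"
    then have "(x, x) \<in> ?r" by (rule tr)
    then show False using edge by blast
  qed
qed

theorem lemma4:
  fixes n t :: nat
  assumes "t \<le> n"
  shows "(\<exists>F. is_kcnf n 2 F \<and> monotone_cnf F \<and> acyclic_cnf F \<and> admissible n t F
              \<and> card (sat_t n t F) = S n t 2)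
         \<and> S_plus n t 2 = S n t 2"
proof -
  define L where "L = Pos ` {..<n} \<union> Neg ` {..<n}"
  define Fs where "Fs = {F. is_kcnf n 2 F \<and> admissible n t F}"
  define Fm where "Fm = {F. is_kcnf n 2 F \<and> monotone_cnf F \<and> admissible n t F}"
  define c where "c = (\<lambda>F. card (sat_t n t F))"
  have e1: "{card (sat_t n t F) |F. is_kcnf n 2 F \<and> admissible n t F} = c ` Fs"
    unfolding Fs_def c_def by blast
  have eS: "S n t 2 = Max (c ` Fs)" unfolding S_def e1 ..
  have e2: "{card (sat_t n t F) |F. is_kcnf n 2 F \<and> monotone_cnf F \<and> admissible n t F} = c ` Fm"
    unfolding Fm_def c_def by blast
  have eP: "S_plus n t 2 = Max (c ` Fm)" unfolding S_plus_def e2 ..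
  have finFs: "finite Fs"
  proof (rule finite_subset[of _ "Pow (Pow L)"])
    show "Fs \<subseteq> Pow (Pow L)" unfolding Fs_def L_def using kcnf_sub by blast
    show "finite (Pow (Pow L))" unfolding L_def by simp
  qed
  have FmFs: "Fm \<subseteq> Fs" unfolding Fm_def Fs_def by blast
  have F0: "{{}} \<in> Fm" unfolding Fm_def is_kcnf_def monotone_cnf_def admissible_def satisfies_def
    by simp
  have finm: "finite (c ` Fm)" using finite_subset[OF FmFs finFs] by simp
  have fins: "finite (c ` Fs)" using finFs by simp
  have nem: "c ` Fm \<noteq> {}" using F0 by blast
  have le1: "Max (c ` Fm) \<le> Max (c ` Fs)"
    using nem FmFs fins by (intro Max_mono) (auto intro: image_mono)
  have nes: "c ` Fs \<noteq> {}" using nem FmFs by blast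
  have "Max (c ` Fs) \<in> c ` Fs" by (rule Max_in[OF fins nes])
  then obtain G where G: "G \<in> Fs" "c G = Max (c ` Fs)" by (metis imageE)
  have Gp: "is_kcnf n 2 G" "admissible n t G" using G(1) by (simp_all add: Fs_def)
  obtain G' where G'p: "is_kcnf n 2 G'" "monotone_cnf G'" "admissible n t G'"
      "card (sat_t n t G) \<le> card (sat_t n t G')"
    using key[OF Gp assms] by blast
  have G': "G' \<in> Fm" "c G \<le> c G'" using G'p by (simp_all add: Fm_def c_def)
  have "c G' \<le> Max (c ` Fm)" using G'(1) finm by simp
  then have eq: "Max (c ` Fm) = Max (c ` Fs)" using le1 G(2) G'(2) by linarith
  have "Max (c ` Fm) \<in> c ` Fm" by (rule Max_in[OF finm nem])
  then obtain H where H: "H \<in> Fm" "c H = Max (c ` Fm)" by (metis imageE)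
  have Hp: "is_kcnf n 2 H" "monotone_cnf H" "admissible n t H" using H(1) unfolding Fm_def by auto
  have "acyclic_cnf H" using Hp(2) mono_acyclic by blast
  moreover have "card (sat_t n t H) = S n t 2" using H(2) eq eS unfolding c_def by simp
  ultimately show ?thesis using Hp eq eS eP by metis
qed

end
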